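(* Let $\mathcal{V}$ be a commutative associative $\mathbb{C}$-algebra which is a domain, equipped with two commuting $\mathbb{C}$-linear derivations $\partial_1,\partial_2$, and let $a\in\mathcal{V}$ and $\mathcal{H}_a=\partial_1\partial_2+a$. For every $\mathcal{P}\in\mathcal{V}[\partial_2]((\partial_1^{-1}))$ there exists a unique $\mathcal{Q}\in\mathcal{V}[\partial_2]((\partial_1^{-1}))$ such that $\mathcal{P}-\mathcal{Q}\mathcal{H}_a\in\mathcal{V}((\partial_1^{-1}))$. The same holds with the roles of $\partial_1$ and $\partial_2$ exchanged.
   Context: $\mathcal{V}[\partial_2]((\partial_1^{-1}))$ denotes the algebra of formal pseudodifferential operators $\sum_{n\le N} p_n\partial_1^n$ with coefficients $p_n\in\mathcal{V}[\partial_2]$ (polynomials in $\partial_2$ with coefficients in $\mathcal{V}$), with multiplication determined by $\partial_i v=v\partial_i+\partial_i(v)$, $\partial_1\partial_2=\partial_2\partial_1$, and $\partial_1^{-1}v=v\partial_1^{-1}-\partial_1(v)\partial_1^{-2}+\partial_1^2(v)\partial_1^{-3}-\cdots$ for $v\in\mathcal{V}$. $\mathcal{V}((\partial_1^{-1}))$ is the subalgebra of such operators not involving $\partial_2$. *)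

theory Defs
  imports Complex_Main
begin

text \<open>The C-algebra structure of V is given by a unital ring homomorphism
  emb from the complex numbers into V.\<close>
definition complex_alg_hom :: "(complex \<Rightarrow> 'v::comm_ring_1) \<Rightarrow> bool" where
  "complex_alg_hom emb \<longleftrightarrow> emb 1 = 1 \<and> (\<forall>x y. emb (x + y) = emb x + emb y)
     \<and> (\<forall>x y. emb (x * y) = emb x * emb y)"

definition complex_derivation :: "(complex \<Rightarrow> 'v::comm_ring_1) \<Rightarrow> ('v \<Rightarrow> 'v) \<Rightarrow> bool" where
  "complex_derivation emb d \<longleftrightarrow> (\<forall>u v. d (u + v) = d u + d v)
     \<and> (\<forall>c v. d (emb c * v) = emb c * d v)
     \<and> (\<forall>u v. d (u * v) = d u * v + u * d v)"

text \<open>An element of V[d2]((d1^-1)) is represented by its coefficient function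
  P :: int => nat => V, P n j being the coefficient of d2^j d1^n, i.e.
  the operator is  sum_{n,j} P n j d2^j d1^n.\<close>
definition is_pdo :: "(int \<Rightarrow> nat \<Rightarrow> 'v::zero) \<Rightarrow> bool" where
  "is_pdo P \<longleftrightarrow> (\<exists>N. \<forall>n j. P n j \<noteq> 0 \<longrightarrow> n \<le> N) \<and> (\<forall>n. finite {j. P n j \<noteq> 0})"

text \<open>The subalgebra V((d1^-1)): no d2 involved.\<close>
definition is_pdo1 :: "(int \<Rightarrow> nat \<Rightarrow> 'v::zero) \<Rightarrow> bool" where
  "is_pdo1 P \<longleftrightarrow> is_pdo P \<and> (\<forall>n j. 0 < j \<longrightarrow> P n j = 0)"

text \<open>Generalized binomial coefficient n(n-1)...(n-b+1)/b! for integer n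
  (an integer; the division is exact).\<close>
definition int_binom :: "int \<Rightarrow> nat \<Rightarrow> int" where
  "int_binom n b = (\<Prod>i<b. n - int i) div fact b"

text \<open>Multiplication, from
  d2^j d1^n w = sum_{a,b} (j choose a) (n choose b) d2^a(d1^b(w)) d2^(j-a) d1^(n-b)
  (generalized binomial coefficient for integer n).\<close>
definition pdo_mult :: "('v::comm_ring_1 \<Rightarrow> 'v) \<Rightarrow> ('v \<Rightarrow> 'v)
    \<Rightarrow> (int \<Rightarrow> nat \<Rightarrow> 'v) \<Rightarrow> (int \<Rightarrow> nat \<Rightarrow> 'v) \<Rightarrow> int \<Rightarrow> nat \<Rightarrow> 'v" where
  "pdo_mult d1 d2 P Q = (\<lambda>s r.
     \<Sum>(n, j, m, k, a, b) \<in> {(n::int, j::nat, m::int, k::nat, a::nat, b::nat). P n j \<noteq> 0 \<and> Q m k \<noteq> 0 \<and> a \<le> j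
                              \<and> r = j + k - a \<and> s = n + m - int b}.
        P n j * of_nat (j choose a) * of_int (int_binom n b) * (d2 ^^ a) ((d1 ^^ b) (Q m k)))"

definition pdo_minus :: "(int \<Rightarrow> nat \<Rightarrow> 'v::ab_group_add) \<Rightarrow> (int \<Rightarrow> nat \<Rightarrow> 'v) \<Rightarrow> int \<Rightarrow> nat \<Rightarrow> 'v" where
  "pdo_minus P Q = (\<lambda>n j. P n j - Q n j)"

definition H_op :: "'v::comm_ring_1 \<Rightarrow> int \<Rightarrow> nat \<Rightarrow> 'v" where
  "H_op a = (\<lambda>n j. (if n = 1 \<and> j = 1 then 1 else 0) + (if n = 0 \<and> j = 0 then a else 0))"

end

theory Submission
  imports Defs
begin

definition Aset :: "(int \<Rightarrow> nat \<Rightarrow> 'v::zero) \<Rightarrow> int \<Rightarrow> nat \<Rightarrow> (int \<times> nat) set" where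
  "Aset Q s r = {(n,j). Q n j \<noteq> 0 \<and> s \<le> n \<and> r \<le> j}"

definition Aop :: "('v::comm_ring_1 \<Rightarrow> 'v) \<Rightarrow> ('v \<Rightarrow> 'v) \<Rightarrow> 'v \<Rightarrow> (int \<Rightarrow> nat \<Rightarrow> 'v) \<Rightarrow> int \<Rightarrow> nat \<Rightarrow> 'v" where
  "Aop d1 d2 a Q s r = (\<Sum>(n,j)\<in>Aset Q s r. Q n j * of_nat (j choose (j - r)) * of_int (int_binom n (nat (n - s)))
      * (d2 ^^ (j - r)) ((d1 ^^ nat (n - s)) a))"

lemma funpow_zero: fixes d :: "'a::zero \<Rightarrow> 'a" shows "d 0 = 0 \<Longrightarrow> (d ^^ n) 0 = 0"
  by (induction n) (simp_all)

lemma funpow_one: fixes d :: "'a::{zero,one} \<Rightarrow> 'a" shows "d 0 = 0 \<Longrightarrow> d 1 = 0 \<Longrightarrow> 0 < n \<Longrightarrow> (d ^^ n) 1 = 0"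
  by (cases n) (simp_all add: funpow_Suc_right funpow_zero del: funpow.simps)

lemma Aop_local:
  assumes "\<And>n j. s \<le> n \<Longrightarrow> Q n j = Q' n j"
  shows "Aop d1 d2 a Q s r = Aop d1 d2 a Q' s r"
proof -
  have "Aset Q s r = Aset Q' s r" using assms by (auto simp: Aset_def)
  then show ?thesis unfolding Aop_def
    by (intro sum.cong) (auto simp: Aset_def assms)
qed

lemma Aop_nz:
  assumes "Aop d1 d2 a Q s r \<noteq> 0"
  shows "\<exists>n j. Q n j \<noteq> 0 \<and> s \<le> n \<and> r \<le> j"
proof (rule ccontr)
  assume "\<not> ?thesis"
  then have "Aset Q s r = {}" by (auto simp: Aset_def)
  then show False using assms by (simp add: Aop_def)
qed

lemma fin_above:
  fixes Q :: "int \<Rightarrow> nat \<Rightarrow> 'v::zero"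
  assumes "\<And>n j. Q n j \<noteq> 0 \<Longrightarrow> n \<le> N" and "\<And>n. s \<le> n \<Longrightarrow> finite {j. Q n j \<noteq> 0}"
  shows "finite {r. \<exists>n j. Q n j \<noteq> 0 \<and> s \<le> n \<and> r \<le> j}"
proof -
  define J where "J = (\<Union>n\<in>{s..N}. {j. Q n j \<noteq> 0})"
  have "finite J" using assms(2) by (auto simp: J_def)
  then obtain M where M: "\<forall>j\<in>J. j \<le> M" using finite_nat_set_iff_bounded_le by blast
  have "{r. \<exists>n j. Q n j \<noteq> 0 \<and> s \<le> n \<and> r \<le> j} \<subseteq> {..M}"
  proof
    fix r assume "r \<in> {r. \<exists>n j. Q n j \<noteq> 0 \<and> s \<le> n \<and> r \<le> j}"
    then obtain n j where "Q n j \<noteq> 0" "s \<le> n" "r \<le> j" by blast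
    moreover then have "j \<in> J" using assms(1) by (auto simp: J_def)
    ultimately show "r \<in> {..M}" using M by force
  qed
  then show ?thesis by (rule finite_subset) simp
qed

lemma mult_H:
  fixes Q :: "int \<Rightarrow> nat \<Rightarrow> 'v::comm_ring_1"
  assumes pdo: "is_pdo Q" and d10: "d1 0 = 0" and d11: "d1 1 = 0" and d20: "d2 0 = 0" and d21: "d2 1 = 0"
  shows "pdo_mult d1 d2 Q (H_op a) s r = (if 1 \<le> r then Q (s-1) (r-1) else 0) + Aop d1 d2 a Q s r"
proof -
  obtain N where N: "\<And>n j. Q n j \<noteq> 0 \<Longrightarrow> n \<le> N" and fin: "\<And>n. finite {j. Q n j \<noteq> 0}"
    using pdo unfolding is_pdo_def by blast
  define f where "f = (\<lambda>(n::int, j::nat, m::int, k::nat, a'::nat, b::nat). Q n j * of_nat (j choose a') * of_int (int_binom n b) * (d2 ^^ a') ((d1 ^^ b) (H_op a m k)))"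
  define S where "S = {(n::int, j::nat, m::int, k::nat, a'::nat, b::nat). Q n j \<noteq> 0 \<and> H_op a m k \<noteq> 0 \<and> a' \<le> j \<and> r = j + k - a' \<and> s = n + m - int b}"
  have lhs: "pdo_mult d1 d2 Q (H_op a) s r = sum f S" unfolding pdo_mult_def f_def S_def by simp
  have Hnz: "\<And>m k. H_op a m k \<noteq> 0 \<Longrightarrow> (m = 1 \<and> k = 1) \<or> (m = 0 \<and> k = 0)"
    by (auto simp: H_op_def split: if_splits)
  define J where "J = (\<Union>n\<in>{s-1..N}. {j. Q n j \<noteq> 0})"
  have "finite J" using fin by (auto simp: J_def)
  then obtain M where M: "\<forall>j\<in>J. j \<le> M" using finite_nat_set_iff_bounded_le by blast
  have sub: "S \<subseteq> {s-1..N} \<times> J \<times> {0..1} \<times> {0..1} \<times> {..M} \<times> {..nat (N+1-s)}"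
  proof
    fix t assume "t \<in> S"
    then obtain n j m k a' b where t: "t = (n,j,m,k,a',b)" and q: "Q n j \<noteq> 0" and h: "H_op a m k \<noteq> 0"
      and aj: "a' \<le> j" and r: "r = j + k - a'" and s: "s = n + m - int b"
      unfolding S_def by blast
    have nN: "n \<le> N" using N q by blast
    have mk: "(m = 1 \<and> k = 1) \<or> (m = 0 \<and> k = 0)" using Hnz h by blast
    have n1: "s - 1 \<le> n" using mk s by auto
    have jJ: "j \<in> J" using q nN n1 by (auto simp: J_def)
    show "t \<in> {s-1..N} \<times> J \<times> {0..1} \<times> {0..1} \<times> {..M} \<times> {..nat (N+1-s)}"
      using t nN n1 jJ M aj mk s by force
  qed
  have finS: "finite S"
    by (rule finite_subset[OF sub]) (use \<open>finite J\<close> in auto)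
  define S1 where "S1 = S \<inter> {(n,j,m,k,a',b). m = 1}"
  define S0 where "S0 = S \<inter> {(n,j,m,k,a',b). m = 0}"
  have SU: "S = S1 \<union> S0" using Hnz unfolding S1_def S0_def S_def by auto
  have "sum f S = sum f S1 + sum f S0"
    unfolding SU by (rule sum.union_disjoint) (use finS in \<open>auto simp: S1_def S0_def\<close>)
  moreover have "sum f S1 = (if 1 \<le> r then Q (s-1) (r-1) else 0)"
  proof -
    define S1' where "S1' = (if 1 \<le> r \<and> Q (s-1) (r-1) \<noteq> 0 then {(s-1, r-1, 1::int, 1::nat, 0::nat, 0::nat)} else {})"
    have "S1' \<subseteq> S1" by (auto simp: S1'_def S1_def S_def H_op_def)
    moreover have "\<forall>t\<in>S1 - S1'. f t = 0"
    proof
      fix t assume "t \<in> S1 - S1'"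
      then obtain n j m k a' b where t: "t = (n,j,m,k,a',b)" and q: "Q n j \<noteq> 0" and h: "H_op a m k \<noteq> 0"
        and aj: "a' \<le> j" and r: "r = j + k - a'" and s: "s = n + m - int b" and m1: "m = 1"
        and nin: "t \<notin> S1'"
        unfolding S1_def S_def by blast
      have k1: "k = 1" using Hnz[OF h] m1 by auto
      have Hv: "H_op a m k = 1" using m1 k1 by (simp add: H_op_def)
      have "a' \<noteq> 0 \<or> b \<noteq> 0"
      proof (rule ccontr)
        assume "\<not> (a' \<noteq> 0 \<or> b \<noteq> 0)"
        then have "a' = 0" "b = 0" by auto
        then have "n = s - 1" "j = r - 1" "1 \<le> r" using s r k1 m1 by auto
        then show False using nin q t m1 k1 \<open>a' = 0\<close> \<open>b = 0\<close> by (auto simp: S1'_def)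
      qed
      then have "(d2 ^^ a') ((d1 ^^ b) 1) = 0"
        apply (cases "b = 0") using funpow_one[of d1 b] funpow_one[of d2 a'] funpow_zero[of d2 a'] d10 d11 d20 d21 by auto
      then show "f t = 0" using t Hv by (simp add: f_def)
    qed
    ultimately have "sum f S1 = sum f S1'"
      by (intro sum.mono_neutral_right) (use finS in \<open>auto simp: S1_def\<close>)
    also have "\<dots> = (if 1 \<le> r then Q (s-1) (r-1) else 0)"
      by (auto simp: S1'_def f_def H_op_def int_binom_def)
    finally show ?thesis .
  qed
  moreover have "sum f S0 = Aop d1 d2 a Q s r"
  proof (cases "a = 0")
    case True
    then have "S0 = {}" by (auto simp: S0_def S_def H_op_def)
    moreover have "Aop d1 d2 a Q s r = 0" unfolding Aop_def
      by (rule sum.neutral) (auto simp: True funpow_zero d10 d20)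
    ultimately show ?thesis by simp
  next
    case False
    define g where "g = (\<lambda>(n::int, j::nat). (n, j, 0::int, 0::nat, j - r, nat (n - s)))"
    have "S0 = g ` Aset Q s r"
    proof
      show "S0 \<subseteq> g ` Aset Q s r"
      proof
        fix t assume "t \<in> S0"
        then obtain n j m k a' b where t: "t = (n,j,m,k,a',b)" and q: "Q n j \<noteq> 0" and h: "H_op a m k \<noteq> 0"
          and aj: "a' \<le> j" and r: "r = j + k - a'" and s: "s = n + m - int b" and m0: "m = 0"
          unfolding S0_def S_def by blast
        have k0: "k = 0" using Hnz[OF h] m0 by auto
        have "(n,j) \<in> Aset Q s r" using q aj r s m0 k0 by (auto simp: Aset_def)
        moreover have "t = g (n,j)" using t m0 k0 aj r s by (auto simp: g_def)
        ultimately show "t \<in> g ` Aset Q s r" by blast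
      qed
      show "g ` Aset Q s r \<subseteq> S0"
        using False by (auto simp: g_def Aset_def S0_def S_def H_op_def)
    qed
    moreover have "inj_on g (Aset Q s r)" by (auto simp: inj_on_def g_def)
    ultimately have "sum f S0 = sum (f \<circ> g) (Aset Q s r)" by (simp add: sum.reindex)
    also have "\<dots> = Aop d1 d2 a Q s r" unfolding Aop_def
      by (intro sum.cong) (auto simp: g_def f_def H_op_def)
    finally show ?thesis .
  qed
  ultimately show ?thesis using lhs by simp
qed


lemma minusT_char:
  fixes Q P :: "int \<Rightarrow> nat \<Rightarrow> 'v::comm_ring_1"
  assumes pQ: "is_pdo Q" and pP: "is_pdo P" and d10: "d1 0 = 0" and d11: "d1 1 = 0" and d20: "d2 0 = 0" and d21: "d2 1 = 0"
  shows "is_pdo1 (pdo_minus P (pdo_mult d1 d2 Q (H_op a))) \<longleftrightarrow>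
     (\<forall>s r. 1 \<le> r \<longrightarrow> Q (s-1) (r-1) + Aop d1 d2 a Q s r = P s r)"
proof -
  have M: "\<And>s r. pdo_minus P (pdo_mult d1 d2 Q (H_op a)) s r = P s r - ((if 1 \<le> r then Q (s-1) (r-1) else 0) + Aop d1 d2 a Q s r)"
    using mult_H[OF pQ d10 d11 d20 d21] by (simp add: pdo_minus_def)
  obtain NQ where NQ: "\<And>n j. Q n j \<noteq> 0 \<Longrightarrow> n \<le> NQ" and fQ: "\<And>n. finite {j. Q n j \<noteq> 0}"
    using pQ unfolding is_pdo_def by blast
  obtain NP where NP: "\<And>n j. P n j \<noteq> 0 \<Longrightarrow> n \<le> NP" and fP: "\<And>n. finite {j. P n j \<noteq> 0}"
    using pP unfolding is_pdo_def by blast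
  have pd: "is_pdo (pdo_minus P (pdo_mult d1 d2 Q (H_op a)))"
    unfolding is_pdo_def
  proof
    show "\<exists>N. \<forall>n j. pdo_minus P (pdo_mult d1 d2 Q (H_op a)) n j \<noteq> 0 \<longrightarrow> n \<le> N"
    proof (intro exI allI impI)
      fix n j assume "pdo_minus P (pdo_mult d1 d2 Q (H_op a)) n j \<noteq> 0"
      then have "P n j \<noteq> 0 \<or> (1 \<le> j \<and> Q (n-1) (j-1) \<noteq> 0) \<or> Aop d1 d2 a Q n j \<noteq> 0"
        unfolding M by (auto split: if_splits)
      then show "n \<le> max NP (NQ + 1)"
        using NP NQ Aop_nz[of d1 d2 a Q n j] by fastforce
    qed
    show "\<forall>n. finite {j. pdo_minus P (pdo_mult d1 d2 Q (H_op a)) n j \<noteq> 0}"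
    proof
      fix n
      have "{j. pdo_minus P (pdo_mult d1 d2 Q (H_op a)) n j \<noteq> 0} \<subseteq>
          {j. P n j \<noteq> 0} \<union> Suc ` {j. Q (n-1) j \<noteq> 0} \<union> {r. \<exists>m j. Q m j \<noteq> 0 \<and> n \<le> m \<and> r \<le> j}"
      proof
        fix j assume "j \<in> {j. pdo_minus P (pdo_mult d1 d2 Q (H_op a)) n j \<noteq> 0}"
        then have "P n j \<noteq> 0 \<or> (1 \<le> j \<and> Q (n-1) (j-1) \<noteq> 0) \<or> Aop d1 d2 a Q n j \<noteq> 0"
          unfolding M by (auto split: if_splits)
        then show "j \<in> {j. P n j \<noteq> 0} \<union> Suc ` {j. Q (n-1) j \<noteq> 0} \<union> {r. \<exists>m j. Q m j \<noteq> 0 \<and> n \<le> m \<and> r \<le> j}"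
        proof (elim disjE)
          assume "1 \<le> j \<and> Q (n-1) (j-1) \<noteq> 0"
          then have "j = Suc (j-1)" "j - 1 \<in> {j. Q (n-1) j \<noteq> 0}" by auto
          then show ?thesis by blast
        qed (use Aop_nz[of d1 d2 a Q n j] in auto)
      qed
      moreover have "finite {r. \<exists>m j. Q m j \<noteq> 0 \<and> n \<le> m \<and> r \<le> j}"
        by (rule fin_above[OF NQ fQ])
      ultimately show "finite {j. pdo_minus P (pdo_mult d1 d2 Q (H_op a)) n j \<noteq> 0}"
        using fP fQ by (meson finite_Un finite_imageI finite_subset)
    qed
  qed
  show ?thesis
    unfolding is_pdo1_def using pd M
    by (auto simp: right_minus_eq)
qed


fun Fseq :: "('v::comm_ring_1 \<Rightarrow> 'v) \<Rightarrow> ('v \<Rightarrow> 'v) \<Rightarrow> 'v \<Rightarrow> (int \<Rightarrow> nat \<Rightarrow> 'v) \<Rightarrow> int \<Rightarrow> nat \<Rightarrow> int \<Rightarrow> nat \<Rightarrow> 'v" where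
  "Fseq d1 d2 a P N 0 = (\<lambda>n j. 0)"
| "Fseq d1 d2 a P N (Suc k) = (\<lambda>n j. if n = N - 1 - int k
      then P (n+1) (j+1) - Aop d1 d2 a (Fseq d1 d2 a P N k) (n+1) (j+1) else Fseq d1 d2 a P N k n j)"

lemma Fseq_zero: "Fseq d1 d2 a P N k n j \<noteq> 0 \<Longrightarrow> N - int k \<le> n \<and> n \<le> N - 1"
  by (induction k) (auto split: if_splits)

lemma Fseq_stable: "k \<le> k' \<Longrightarrow> N - 1 - int k < n \<Longrightarrow> Fseq d1 d2 a P N k' n j = Fseq d1 d2 a P N k n j"
proof (induction k' rule: dec_induct)
  case base then show ?case by simp
next
  case (step m) then show ?case by auto
qed

lemma unique_gen:
  fixes P Q1 Q2 :: "int \<Rightarrow> nat \<Rightarrow> 'v::comm_ring_1"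
  assumes p1: "is_pdo Q1" and p2: "is_pdo Q2"
    and e1: "\<And>s r. 1 \<le> r \<Longrightarrow> Q1 (s-1) (r-1) + Aop d1 d2 a Q1 s r = P s r"
    and e2: "\<And>s r. 1 \<le> r \<Longrightarrow> Q2 (s-1) (r-1) + Aop d1 d2 a Q2 s r = P s r"
  shows "Q1 = Q2"
proof -
  obtain N1 where N1: "\<And>n j. Q1 n j \<noteq> 0 \<Longrightarrow> n \<le> N1" using p1 unfolding is_pdo_def by blast
  obtain N2 where N2: "\<And>n j. Q2 n j \<noteq> 0 \<Longrightarrow> n \<le> N2" using p2 unfolding is_pdo_def by blast
  define N where "N = max N1 N2"
  have key: "\<forall>n j. N - int k < n \<longrightarrow> Q1 n j = Q2 n j" for k
  proof (induction k)
    case 0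
    show ?case
    proof (intro allI impI)
      fix n j assume "N - int 0 < n"
      then have "\<not> n \<le> N1" "\<not> n \<le> N2" by (auto simp: N_def)
      then show "Q1 n j = Q2 n j" using N1 N2 by metis
    qed
  next
    case (Suc k)
    show ?case
    proof (intro allI impI)
      fix n j assume n: "N - int (Suc k) < n"
      show "Q1 n j = Q2 n j"
      proof (cases "N - int k < n")
        case True then show ?thesis using Suc by blast
      next
        case False
        have loc: "Aop d1 d2 a Q1 (n+1) (j+1) = Aop d1 d2 a Q2 (n+1) (j+1)"
          by (rule Aop_local) (use Suc False n in auto)
        have "Q1 n j + Aop d1 d2 a Q1 (n+1) (j+1) = Q2 n j + Aop d1 d2 a Q2 (n+1) (j+1)"
          using e1[of "j+1" "n+1"] e2[of "j+1" "n+1"] by simp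
        then show ?thesis using loc by simp
      qed
    qed
  qed
  show ?thesis
  proof (intro ext)
    fix n j
    show "Q1 n j = Q2 n j" using key[of "nat (N - n) + 1"] by auto
  qed
qed

lemma exist_gen:
  fixes P :: "int \<Rightarrow> nat \<Rightarrow> 'v::comm_ring_1"
  assumes pP: "is_pdo P"
  shows "\<exists>Q. is_pdo Q \<and> (\<forall>s r. 1 \<le> r \<longrightarrow> Q (s-1) (r-1) + Aop d1 d2 a Q s r = P s r)"
proof -
  obtain N where NP: "\<And>n j. P n j \<noteq> 0 \<Longrightarrow> n \<le> N" and fP: "\<And>n. finite {j. P n j \<noteq> 0}"
    using pP unfolding is_pdo_def by blast
  define F where "F = Fseq d1 d2 a P N"
  define Q where "Q = (\<lambda>n j. F (nat (N - n)) n j)"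
  have Fz: "\<And>k n j. F k n j \<noteq> 0 \<Longrightarrow> N - int k \<le> n \<and> n \<le> N - 1"
    unfolding F_def by (rule Fseq_zero)
  have Qz: "\<And>n j. Q n j \<noteq> 0 \<Longrightarrow> n \<le> N - 1" using Fz unfolding Q_def by blast
  have agree: "\<And>k n j. N - 1 - int k < n \<Longrightarrow> F k n j = Q n j"
  proof -
    fix k n j assume n: "N - 1 - int k < n"
    show "F k n j = Q n j"
    proof (cases "N \<le> n")
      case True then show ?thesis using Fz[of k n j] Qz[of n j] by force
    next
      case False
      have "F k n j = F (nat (N - n)) n j"
        unfolding F_def by (rule Fseq_stable) (use n False in auto)
      then show ?thesis by (simp add: Q_def)
    qed
  qed
  have eq: "Q (s-1) (r-1) + Aop d1 d2 a Q s r = P s r" if r: "1 \<le> r" for s r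
  proof (cases "s \<le> N")
    case True
    define k where "k = nat (N - s)"
    have Qs: "Q (s-1) (r-1) = F (Suc k) (s-1) (r-1)"
      unfolding Q_def k_def using True by (simp add: Suc_nat_eq_nat_zadd1 algebra_simps)
    have "F (Suc k) (s-1) (r-1) = P s r - Aop d1 d2 a (F k) s r"
      unfolding F_def k_def using True r by simp
    moreover have "Aop d1 d2 a (F k) s r = Aop d1 d2 a Q s r"
      by (rule Aop_local) (rule agree, use True in \<open>simp add: k_def\<close>)
    ultimately show ?thesis using Qs by simp
  next
    case False
    have "Q (s-1) (r-1) = 0" using Qz False by force
    moreover have "Aop d1 d2 a Q s r = 0"
      using Aop_nz[of d1 d2 a Q s r] Qz False by force
    moreover have "P s r = 0" using NP False by force
    ultimately show ?thesis by simp
  qed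
  have rows: "\<forall>n. N - 1 - int k < n \<longrightarrow> finite {j. Q n j \<noteq> 0}" for k
  proof (induction k)
    case 0
    show ?case
    proof (intro allI impI)
      fix n assume "N - 1 - int 0 < n"
      then have "{j. Q n j \<noteq> 0} = {}" using Qz by force
      then show "finite {j. Q n j \<noteq> 0}" by simp
    qed
  next
    case (Suc k)
    show ?case
    proof (intro allI impI)
      fix n assume n: "N - 1 - int (Suc k) < n"
      show "finite {j. Q n j \<noteq> 0}"
      proof (cases "N - 1 - int k < n")
        case True then show ?thesis using Suc by blast
      next
        case False
        have "{j. Q n j \<noteq> 0} \<subseteq> Suc -` {j. P (n+1) j \<noteq> 0} \<union> Suc -` {r. \<exists>m j. Q m j \<noteq> 0 \<and> n+1 \<le> m \<and> r \<le> j}"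
        proof
          fix j assume "j \<in> {j. Q n j \<noteq> 0}"
          moreover have "Q n j + Aop d1 d2 a Q (n+1) (Suc j) = P (n+1) (Suc j)"
            using eq[of "Suc j" "n+1"] by simp
          ultimately show "j \<in> Suc -` {j. P (n+1) j \<noteq> 0} \<union> Suc -` {r. \<exists>m j. Q m j \<noteq> 0 \<and> n+1 \<le> m \<and> r \<le> j}"
            using Aop_nz[of d1 d2 a Q "n+1" "Suc j"] by force
        qed
        moreover have "finite {r. \<exists>m j. Q m j \<noteq> 0 \<and> n+1 \<le> m \<and> r \<le> j}"
          by (rule fin_above[OF Qz]) (use Suc False n in auto)
        ultimately show ?thesis using fP
          by (meson finite_Un finite_subset finite_vimageI inj_Suc)
      qed
    qed
  qed
  have "is_pdo Q"
    unfolding is_pdo_def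
  proof
    show "\<exists>N. \<forall>n j. Q n j \<noteq> 0 \<longrightarrow> n \<le> N" using Qz by blast
    show "\<forall>n. finite {j. Q n j \<noteq> 0}"
    proof
      fix n show "finite {j. Q n j \<noteq> 0}" using rows[of "nat (N - n) + 1"] by auto
    qed
  qed
  then show ?thesis using eq by blast
qed

lemma main_gen:
  fixes P :: "int \<Rightarrow> nat \<Rightarrow> 'v::comm_ring_1"
  assumes pP: "is_pdo P" and d10: "d1 0 = 0" and d11: "d1 1 = 0" and d20: "d2 0 = 0" and d21: "d2 1 = 0"
  shows "\<exists>!Q. is_pdo Q \<and> is_pdo1 (pdo_minus P (pdo_mult d1 d2 Q (H_op a)))"
proof -
  obtain Q where Q: "is_pdo Q" "\<forall>s r. 1 \<le> r \<longrightarrow> Q (s-1) (r-1) + Aop d1 d2 a Q s r = P s r"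
    using exist_gen[OF pP] by blast
  show ?thesis
  proof (rule ex1I[of _ Q])
    show "is_pdo Q \<and> is_pdo1 (pdo_minus P (pdo_mult d1 d2 Q (H_op a)))"
      using Q minusT_char[OF Q(1) pP d10 d11 d20 d21] by blast
  next
    fix Q' assume "is_pdo Q' \<and> is_pdo1 (pdo_minus P (pdo_mult d1 d2 Q' (H_op a)))"
    then have "is_pdo Q'" "\<forall>s r. 1 \<le> r \<longrightarrow> Q' (s-1) (r-1) + Aop d1 d2 a Q' s r = P s r"
      using minusT_char[OF _ pP d10 d11 d20 d21, of Q'] by blast+
    then show "Q' = Q" using unique_gen[OF _ Q(1), of Q' d1 d2 a P] Q(2) by blast
  qed
qed

lemma deriv01: "complex_derivation emb d \<Longrightarrow> d 0 = 0 \<and> d 1 = 0"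
proof -
  assume "complex_derivation emb d"
  then have a: "\<And>u v. d (u + v) = d u + d v" and m: "\<And>u v. d (u * v) = d u * v + u * d v"
    unfolding complex_derivation_def by blast+
  have "d 0 = d 0 + d 0" using a[of 0 0] by simp
  moreover have "d 1 = d 1 + d 1" using m[of 1 1] by simp
  ultimately show ?thesis by simp
qed

theorem lemma1:
  fixes emb :: "complex \<Rightarrow> 'v::idom"
    and d1 d2 :: "'v \<Rightarrow> 'v"
    and a :: 'v
  assumes "complex_alg_hom emb"
    and "complex_derivation emb d1"
    and "complex_derivation emb d2"
    and "\<And>v. d1 (d2 v) = d2 (d1 v)"
  shows "(\<forall>P. is_pdo P \<longrightarrow>
            (\<exists>!Q. is_pdo Q \<and> is_pdo1 (pdo_minus P (pdo_mult d1 d2 Q (H_op a)))))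
       \<and> (\<forall>P. is_pdo P \<longrightarrow>
            (\<exists>!Q. is_pdo Q \<and> is_pdo1 (pdo_minus P (pdo_mult d2 d1 Q (H_op a)))))"
  using main_gen deriv01[OF assms(2)] deriv01[OF assms(3)] by blast

end
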